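(* Let $X\in C^\infty(\mathbb T;\mathbb R)$ have at least one zero and assume all its zeroes are non-degenerate (i.e. $X(x_0)=0\Rightarrow X'(x_0)\neq0$). Let $h(x,\xi):=\xi X(x)$ on $T^*\mathbb T\simeq\mathbb T\times\mathbb R$. Then there exist a function $a\in C^\infty(T^*\mathbb T\setminus\{\xi=0\};\mathbb R)$, positively homogeneous of degree one, and $\delta>0$ such that $$\{h,a\}(x,\xi)\ge\delta|\xi|\qquad\forall (x,\xi)\in T^*\mathbb T,\ \xi\neq0,$$ and there exists a non-empty open set $\mathcal W\subset\mathbb T$ such that $a(x,\xi)\le-\frac{|\xi|}2$ for all $x\in\mathcal W$ and $\xi\neq0$.
   Context: $\mathbb T:=\mathbb R/2\pi\mathbb Z$. Poisson bracket: $\{h,f\}:=\partial_\xi h\,\partial_xf-\partial_xh\,\partial_\xi f$. A function $f$ on $T^*\mathbb T\setminus\{\xi=0\}$ is positively homogeneous of degree $\rho$ if $f(x,\lambda\xi)=\lambda^\rho f(x,\xi)$ for all $\lambda>0$. A function $a$ with the stated properties is called an escape function for $h$. *)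

theory Defs
  imports "HOL-Analysis.Analysis"
begin

text \<open>Functions on the circle T = R/2piZ are represented as 2pi-periodic functions on R;
functions on T*T (minus zero section) as functions of (x,xi) that are 2pi-periodic in x.\<close>

definition periodic2pi :: "(real \<Rightarrow> 'b) \<Rightarrow> bool" where
  "periodic2pi f \<longleftrightarrow> (\<forall>x. f (x + 2*pi) = f x)"

definition smooth1_on :: "real set \<Rightarrow> (real \<Rightarrow> real) \<Rightarrow> bool" where
  "smooth1_on S f \<longleftrightarrow> (\<exists>D :: nat \<Rightarrow> real \<Rightarrow> real. D 0 = f \<and>
     (\<forall>n. \<forall>x\<in>S. (D n has_field_derivative D (Suc n) x) (at x)))"

text \<open>D w is the partial derivative along the word w,
True = d/dx, False = d/dxi (applied from the right).\<close>
definition smooth2_on :: "(real \<times> real) set \<Rightarrow> (real \<Rightarrow> real \<Rightarrow> real) \<Rightarrow> bool" where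
  "smooth2_on U f \<longleftrightarrow> (\<exists>D :: bool list \<Rightarrow> real \<Rightarrow> real \<Rightarrow> real. D [] = f \<and>
     (\<forall>w. continuous_on U (\<lambda>(x,y). D w x y)) \<and>
     (\<forall>w. \<forall>(x,y)\<in>U.
        ((\<lambda>t. D w t y) has_field_derivative D (True # w) x y) (at x) \<and>
        ((\<lambda>t. D w x t) has_field_derivative D (False # w) x y) (at y)))"

definition poisson :: "(real \<Rightarrow> real \<Rightarrow> real) \<Rightarrow> (real \<Rightarrow> real \<Rightarrow> real) \<Rightarrow> real \<Rightarrow> real \<Rightarrow> real" where
  "poisson h f x \<xi> =
     deriv (\<lambda>\<eta>. h x \<eta>) \<xi> * deriv (\<lambda>y. f y \<xi>) x - deriv (\<lambda>y. h y \<xi>) x * deriv (\<lambda>\<eta>. f x \<eta>) \<xi>"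

definition pos_homogeneous :: "real \<Rightarrow> (real \<Rightarrow> real \<Rightarrow> real) \<Rightarrow> bool" where
  "pos_homogeneous \<rho> f \<longleftrightarrow> (\<forall>x \<xi> l. \<xi> \<noteq> 0 \<longrightarrow> l > 0 \<longrightarrow> f x (l * \<xi>) = l powr \<rho> * f x \<xi>)"

end

theory Submission
  imports Defs
begin


lemma sm_unfold:
  assumes "smooth1_on UNIV f"
  shows "\<exists>f'. (\<forall>x. (f has_field_derivative f' x) (at x)) \<and> smooth1_on UNIV f'"
proof -
  from assms obtain D where D: "D 0 = f" "\<forall>n. \<forall>x\<in>UNIV. (D n has_field_derivative D (Suc n) x) (at x)"
    unfolding smooth1_on_def by blast
  have "smooth1_on UNIV (D 1)" unfolding smooth1_on_def
    by (rule exI[of _ "\<lambda>n. D (Suc n)"]) (use D in auto)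
  with D show ?thesis by (metis One_nat_def UNIV_I)
qed

lemma sm_fold:
  assumes "\<forall>x. (f has_field_derivative f' x) (at x)" "smooth1_on UNIV f'"
  shows "smooth1_on UNIV f"
proof -
  from assms(2) obtain D where D: "D 0 = f'" "\<forall>n. \<forall>x\<in>UNIV. (D n has_field_derivative D (Suc n) x) (at x)"
    unfolding smooth1_on_def by blast
  show ?thesis unfolding smooth1_on_def
  proof (rule exI[of _ "\<lambda>n. case n of 0 \<Rightarrow> f | Suc m \<Rightarrow> D m"], intro conjI allI ballI)
    fix n x show "((case n of 0 \<Rightarrow> f | Suc m \<Rightarrow> D m) has_field_derivative
      (case Suc n of 0 \<Rightarrow> f | Suc m \<Rightarrow> D m) x) (at x)"
      using D assms(1) by (cases n) auto
  qed simp
qed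

lemma sm_coinduct:
  assumes "P f" and step: "\<And>g. P g \<Longrightarrow> \<exists>g'. (\<forall>x. (g has_field_derivative g' x) (at x)) \<and> P g'"
  shows "smooth1_on UNIV f"
proof -
  obtain N where N: "\<And>g. P g \<Longrightarrow> (\<forall>x. (g has_field_derivative N g x) (at x)) \<and> P (N g)"
    using step by metis
  define D where "D n = (N ^^ n) f" for n
  have PD: "P (D n)" for n by (induction n) (auto simp: D_def assms(1) N)
  show ?thesis unfolding smooth1_on_def
    by (rule exI[of _ D]) (use PD N in \<open>auto simp: D_def\<close>)
qed

lemma sm_const: "smooth1_on UNIV (\<lambda>_. c)"
  by (rule sm_coinduct[where P="\<lambda>g. \<exists>c. g = (\<lambda>_. c)"]) (auto intro!: exI[of _ "\<lambda>_. 0"])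

inductive RS :: "(real \<Rightarrow> real) \<Rightarrow> bool" where
  base: "smooth1_on UNIV f \<Longrightarrow> RS f"
| inv: "smooth1_on UNIV f \<Longrightarrow> (\<forall>x. f x \<noteq> 0) \<Longrightarrow> RS (\<lambda>x. inverse (f x))"
| add: "RS f \<Longrightarrow> RS g \<Longrightarrow> RS (\<lambda>x. f x + g x)"
| mul: "RS f \<Longrightarrow> RS g \<Longrightarrow> RS (\<lambda>x. f x * g x)"

lemma RS_deriv: "RS h \<Longrightarrow> \<exists>h'. (\<forall>x. (h has_field_derivative h' x) (at x)) \<and> RS h'"
proof (induction rule: RS.induct)
  case (base f)
  then show ?case using sm_unfold RS.base by blast
next
  case (inv f)
  then obtain f' where f': "\<forall>x. (f has_field_derivative f' x) (at x)" "smooth1_on UNIV f'"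
    using sm_unfold by blast
  have "RS (\<lambda>x. (\<lambda>_. -1) x * f' x * (inverse (f x) * inverse (f x)))"
    by (intro RS.mul RS.base RS.inv sm_const f' inv)
  moreover have "((\<lambda>x. inverse (f x)) has_field_derivative (-1) * f' x * (inverse (f x) * inverse (f x))) (at x)" for x
    using DERIV_inverse_fun[OF f'(1)[rule_format, of x]] inv(2)
    by (simp add: power2_eq_square)
  ultimately show ?case by (intro exI[of _ "\<lambda>x. (-1) * f' x * (inverse (f x) * inverse (f x))"]) simp
next
  case (add f g)
  then obtain f' g' where "\<forall>x. (f has_field_derivative f' x) (at x)" "RS f'"
     "\<forall>x. (g has_field_derivative g' x) (at x)" "RS g'" by blast
  then show ?case by (intro exI[of _ "\<lambda>x. f' x + g' x"]) (auto intro: RS.add DERIV_add)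
next
  case (mul f g)
  obtain f' where f': "\<forall>x. (f has_field_derivative f' x) (at x)" "RS f'" using mul.IH(1) by blast
  obtain g' where g': "\<forall>x. (g has_field_derivative g' x) (at x)" "RS g'" using mul.IH(2) by blast
  show ?case
    by (intro exI[of _ "\<lambda>x. f' x * g x + g' x * f x"] conjI allI DERIV_mult RS.add RS.mul)
       (use f' g' mul.hyps in auto)
qed

lemma RS_smooth: "RS h \<Longrightarrow> smooth1_on UNIV h"
  by (rule sm_coinduct[where P=RS]) (auto dest: RS_deriv)

lemma sm_add: "smooth1_on UNIV f \<Longrightarrow> smooth1_on UNIV g \<Longrightarrow> smooth1_on UNIV (\<lambda>x. f x + g x)"
  by (rule RS_smooth) (intro RS.intros)
lemma sm_mul: "smooth1_on UNIV f \<Longrightarrow> smooth1_on UNIV g \<Longrightarrow> smooth1_on UNIV (\<lambda>x. f x * g x)"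
  by (rule RS_smooth) (intro RS.intros)
lemma sm_inverse: "smooth1_on UNIV f \<Longrightarrow> \<forall>x. f x \<noteq> 0 \<Longrightarrow> smooth1_on UNIV (\<lambda>x. inverse (f x))"
  by (rule RS_smooth) (intro RS.intros)

lemma sm_arctan:
  assumes "smooth1_on UNIV u"
  shows "smooth1_on UNIV (\<lambda>x. arctan (u x))"
proof -
  obtain u' where u': "\<forall>x. (u has_field_derivative u' x) (at x)" "smooth1_on UNIV u'"
    using sm_unfold[OF assms] by blast
  have pos: "\<forall>x. 1 + u x * u x \<noteq> 0"
    by (metis add_nonneg_nonneg le_add_same_cancel1 not_one_le_zero zero_le_square add.commute) 
  show ?thesis
  proof (rule sm_fold)
    show "\<forall>x. ((\<lambda>x. arctan (u x)) has_field_derivative u' x * inverse (1 + u x * u x)) (at x)"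
      using u'(1) by (auto intro!: derivative_eq_intros simp: power2_eq_square field_simps)
    show "smooth1_on UNIV (\<lambda>x. u' x * inverse (1 + u x * u x))"
      by (intro sm_mul sm_inverse sm_add sm_const u'(2) assms pos)
  qed
qed

lemma sm_sin: "smooth1_on UNIV (\<lambda>x. sin (x + c))"
proof (rule sm_coinduct[where P="\<lambda>g. \<exists>d. g = (\<lambda>x. sin (x + c + d))"])
  show "\<exists>d. (\<lambda>x. sin (x + c)) = (\<lambda>x. sin (x + c + d))" by (rule exI[of _ 0]) simp
next
  fix g assume "\<exists>d. g = (\<lambda>x. sin (x + c + d))"
  then obtain d where g: "g = (\<lambda>x. sin (x + c + d))" by blast
  have "(g has_field_derivative sin (x + c + (d + pi/2))) (at x)" for x
    unfolding g by (auto intro!: derivative_eq_intros simp: sin_add cos_add add.assoc algebra_simps)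
  then show "\<exists>g'. (\<forall>x. (g has_field_derivative g' x) (at x)) \<and> (\<exists>d. g' = (\<lambda>x. sin (x + c + d)))"
    by (intro exI[of _ "\<lambda>x. sin (x + c + (d + pi/2))"]) auto
qed

lemma sm_cos: "smooth1_on UNIV (\<lambda>x. cos (x + c))"
proof -
  have "(\<lambda>x. cos (x + c)) = (\<lambda>x. sin (x + (c + pi/2)))"
    by (auto simp: sin_add cos_add add.assoc[symmetric])
  then show ?thesis using sm_sin by metis
qed



lemma per_nat: "periodic2pi f \<Longrightarrow> f (x + 2*pi*real n) = f x"
proof (induction n arbitrary: x)
  case (Suc n)
  have "f (x + 2*pi*real (Suc n)) = f ((x + 2*pi*real n) + 2*pi)" by (simp add: algebra_simps)
  also have "\<dots> = f (x + 2*pi*real n)" using Suc.prems unfolding periodic2pi_def by blast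
  finally show ?case using Suc by simp
qed simp

lemma per_int: "periodic2pi f \<Longrightarrow> f (x + 2*pi * of_int k) = f x"
proof (cases "k \<ge> 0")
  case True
  assume p: "periodic2pi f"
  from True obtain n where "k = int n" by (metis nonneg_eq_int)
  then show ?thesis using per_nat[OF p] by simp
next
  case False
  assume p: "periodic2pi f"
  from False obtain n where n: "k = - int n" by (metis neg_int_cases linorder_not_le less_imp_le)
  have "f x = f ((x + 2*pi * of_int k) + 2*pi*real n)" using n by simp
  also have "\<dots> = f (x + 2*pi * of_int k)" by (rule per_nat[OF p])
  finally show ?thesis by simp
qed

lemma per_reduce:
  assumes "periodic2pi f" shows "\<exists>t\<in>{0..2*pi}. f x = f t"
proof -
  define k where "k = \<lfloor>x / (2*pi)\<rfloor>"
  define t where "t = x - 2*pi * of_int k"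
  have "of_int k \<le> x / (2*pi)" "x / (2*pi) < of_int k + 1" unfolding k_def by linarith+
  then have "2*pi * of_int k \<le> x" "x < 2*pi * of_int k + 2*pi"
    using pi_gt_zero by (simp_all add: field_simps)
  then have "t \<in> {0..2*pi}" unfolding t_def by auto
  moreover have "f x = f t" using per_int[OF assms, of t k] unfolding t_def by simp
  ultimately show ?thesis by blast
qed

lemma per_deriv:
  assumes p: "periodic2pi f" and d: "\<forall>x. (f has_field_derivative f' x) (at x)"
  shows "periodic2pi f'"
  unfolding periodic2pi_def
proof
  fix x
  have "((\<lambda>t. f (t + 2*pi)) has_field_derivative f' (x + 2*pi)) (at x)"
    using d DERIV_shift by blast
  moreover have "(\<lambda>t. f (t + 2*pi)) = f" using p unfolding periodic2pi_def by auto
  ultimately show "f' (x + 2*pi) = f' x" using d DERIV_unique by metis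
qed

lemma per_bound:
  fixes f :: "real \<Rightarrow> real"
  assumes "periodic2pi f" "continuous_on UNIV f"
  shows "\<exists>M. \<forall>x. \<bar>f x\<bar> \<le> M"
proof -
  have "continuous_on {0..2*pi} (\<lambda>x. \<bar>f x\<bar>)"
    using continuous_on_subset[OF assms(2)] by (intro continuous_intros) auto
  then obtain m where "m \<in> {0..2*pi}" "\<forall>y\<in>{0..2*pi}. \<bar>f y\<bar> \<le> \<bar>f m\<bar>"
    using continuous_attains_sup[of "{0..2*pi}" "\<lambda>x. \<bar>f x\<bar>"] pi_gt_zero by auto
  then show ?thesis using per_reduce[OF assms(1)] by metis
qed

lemma per_min:
  fixes f :: "real \<Rightarrow> real"
  assumes "periodic2pi f" "continuous_on UNIV f" "\<forall>x. f x > 0"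
  shows "\<exists>\<mu>>0. \<forall>x. f x \<ge> \<mu>"
proof -
  have "continuous_on {0..2*pi} f"
    using assms(2) by (auto intro: continuous_on_subset)
  then obtain m where "m \<in> {0..2*pi}" "\<forall>y\<in>{0..2*pi}. f m \<le> f y"
    using continuous_attains_inf[of "{0..2*pi}" f] pi_gt_zero by auto
  then show ?thesis using per_reduce[OF assms(1)] assms(3) by metis
qed

lemma cos_ineq:
  fixes y :: real assumes "\<bar>y\<bar> \<le> pi"
  shows "y^2 \<le> 18 * (1 - cos y)"
proof -
  define t where "t = \<bar>y\<bar>/2"
  have t0: "0 \<le> t" and t2: "t \<le> 2" using assms pi_less_4 by (auto simp: t_def)
  have "\<bar>sin t - (\<Sum>m<3. sin_coeff m * t ^ m)\<bar> \<le> inverse (fact 3) * \<bar>t\<bar> ^ 3"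
    by (rule Maclaurin_sin_bound)
  moreover have "(\<Sum>m<3. sin_coeff m * t ^ m) = t"
    by (simp add: numeral_3_eq_3 sin_coeff_def)
  ultimately have "\<bar>sin t - t\<bar> \<le> t^3/6" using t0 by (simp add: fact_numeral)
  then have "sin t \<ge> t - t^3/6" by linarith
  moreover have "t - t^3/6 \<ge> t/3"
  proof -
    have "t^2 \<le> 4" using t0 t2 by (metis power2_le_iff_abs_le abs_of_nonneg power2_eq_square numeral_Bit0 mult_2 num_double numeral_times_numeral real_sqrt_four real_sqrt_le_iff zero_le_numeral)
    then have "t * t^2 \<le> t * 4" using t0 by (intro mult_left_mono) auto
    then show ?thesis by (simp add: power3_eq_cube power2_eq_square)
  qed
  ultimately have s: "sin t \<ge> t/3" by linarith
  have "1 - cos y = 2 * (sin (y/2))^2"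
    using cos_double_sin[of "y/2"] by simp
  also have "(sin (y/2))^2 = (sin t)^2"
    by (cases "y \<ge> 0") (auto simp: t_def)
  finally have e: "1 - cos y = 2 * (sin t)^2" .
  have "(t/3)^2 \<le> (sin t)^2" using s t0 by (intro power_mono) auto
  moreover have "y^2 = 4 * t^2" by (simp add: t_def power2_eq_square field_simps)
  ultimately show ?thesis using e by (simp add: power2_eq_square)
qed



lemma lipschitz_deriv:
  fixes f :: "real \<Rightarrow> real"
  assumes d: "\<forall>t. (f has_field_derivative f' t) (at t)" and L: "\<forall>t. \<bar>f' t\<bar> \<le> L"
  shows "\<bar>f b - f a\<bar> \<le> L * \<bar>b - a\<bar>"
proof -
  have *: "\<bar>f v - f u\<bar> \<le> L * \<bar>v - u\<bar>" if "u < v" for u v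
  proof -
    have "continuous_on {u..v} f"
      using d by (meson DERIV_isCont continuous_at_imp_continuous_on)
    moreover have "\<And>x. f differentiable (at x)" using d real_differentiable_def by blast
    ultimately obtain l z where "DERIV f z :> l" "f v - f u = (v - u) * l"
      using MVT[of u v f] \<open>u < v\<close> by blast
    then have "l = f' z" using d DERIV_unique by blast
    then have "\<bar>f v - f u\<bar> = \<bar>v - u\<bar> * \<bar>f' z\<bar>" using \<open>f v - f u = (v - u) * l\<close> by (simp add: abs_mult)
    also have "\<dots> \<le> \<bar>v - u\<bar> * L" using L by (intro mult_left_mono) auto
    finally show ?thesis by (simp add: mult.commute)
  qed
  show ?thesis
    using *[of a b] *[of b a] by (cases "a < b"; cases "b < a") (auto simp: abs_minus_commute)
qed

lemma deriv_abs_nz: "(y::real) \<noteq> 0 \<Longrightarrow> (abs has_field_derivative sgn y) (at y)"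
proof (cases "y > 0")
  case True
  show ?thesis
    by (rule has_field_derivative_transform_within_open[of "\<lambda>x. x" _ _ "{0<..}"])
       (use True in \<open>auto intro!: derivative_eq_intros\<close>)
next
  case False
  assume "y \<noteq> 0"
  with False have "y < 0" by simp
  show ?thesis
    by (rule has_field_derivative_transform_within_open[of "\<lambda>x. -x" _ _ "{..<0}"])
       (use \<open>y < 0\<close> in \<open>auto intro!: derivative_eq_intros\<close>)
qed

lemma deriv_sgn_nz: "(y::real) \<noteq> 0 \<Longrightarrow> (sgn has_field_derivative 0) (at y)"
proof (cases "y > 0")
  case True
  show ?thesis
    by (rule has_field_derivative_transform_within_open[of "\<lambda>x. 1" _ _ "{0<..}"])
       (use True in \<open>auto intro!: derivative_eq_intros\<close>)
next
  case False
  assume "y \<noteq> 0"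
  with False have "y < 0" by simp
  show ?thesis
    by (rule has_field_derivative_transform_within_open[of "\<lambda>x. -1" _ _ "{..<0}"])
       (use \<open>y < 0\<close> in \<open>auto intro!: derivative_eq_intros\<close>)
qed

definition GG :: "nat \<Rightarrow> real \<Rightarrow> real" where
  "GG n y = (if n = 0 then \<bar>y\<bar> else if n = 1 then sgn y else 0)"

lemma GG_deriv: "y \<noteq> 0 \<Longrightarrow> (GG n has_field_derivative GG (Suc n) y) (at y)"
proof -
  assume y: "y \<noteq> 0"
  consider "n = 0" | "n = 1" | "n \<ge> 2" by linarith
  then show ?thesis
  proof cases
    case 1
    have "GG n = abs" by (auto simp: GG_def 1)
    then show ?thesis using deriv_abs_nz[OF y] by (simp add: GG_def 1)
  next
    case 2
    have "GG n = sgn" by (auto simp: GG_def 2)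
    then show ?thesis using deriv_sgn_nz[OF y] by (simp add: GG_def 2)
  next
    case 3
    have "GG n = (\<lambda>_. 0)" using 3 by (auto simp: GG_def)
    then show ?thesis using 3 by (simp add: GG_def)
  qed
qed

lemma GG_cont: "continuous_on (-{0}) (GG n)"
proof -
  consider "n = 0" | "n = 1" | "n \<ge> 2" by linarith
  then show ?thesis
  proof cases
    case 1
    have "GG n = abs" by (auto simp: GG_def 1)
    then show ?thesis by (simp add: continuous_on_rabs continuous_on_id)
  next
    case 2
    have "GG n = sgn" by (auto simp: GG_def 2)
    then show ?thesis by (auto intro!: continuous_intros)
  next
    case 3
    have "GG n = (\<lambda>_. 0)" using 3 by (auto simp: GG_def)
    then show ?thesis by simp
  qed
qed

lemma smooth2_abs:
  assumes "smooth1_on UNIV b"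
  shows "smooth2_on {(x, \<xi>). \<xi> \<noteq> 0} (\<lambda>x \<xi>. \<bar>\<xi>\<bar> * b x)"
proof -
  obtain B where B: "B 0 = b" "\<forall>n x. (B n has_field_derivative B (Suc n) x) (at x)"
    using assms unfolding smooth1_on_def by blast
  have Bc: "continuous_on UNIV (B n)" for n
    using B(2) by (meson DERIV_isCont continuous_at_imp_continuous_on)
  define E where "E w x y = GG (length (filter Not w)) y * B (length (filter id w)) x" for w x y
  show ?thesis unfolding smooth2_on_def
  proof (intro exI[of _ E] conjI allI ballI)
    show "E [] = (\<lambda>x \<xi>. \<bar>\<xi>\<bar> * b x)" by (rule ext)+ (simp add: E_def GG_def B(1))
  next
    fix w
    have "continuous_on {(x, \<xi>). \<xi> \<noteq> 0} (\<lambda>p. GG (length (filter Not w)) (snd p) * B (length (filter id w)) (fst p))"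
      by (intro continuous_on_mult continuous_on_compose2[OF GG_cont] continuous_on_compose2[OF Bc]
          continuous_on_fst continuous_on_snd continuous_on_id) auto
    then show "continuous_on {(x, \<xi>). \<xi> \<noteq> 0} (\<lambda>(x, y). E w x y)"
      by (simp add: E_def case_prod_beta)
  next
    fix w and p :: "real \<times> real" assume p: "p \<in> {(x, \<xi>). \<xi> \<noteq> 0}"
    obtain x y where xy: "p = (x, y)" by force
    with p have y: "y \<noteq> 0" by simp
    have 1: "((\<lambda>t. E w t y) has_field_derivative E (True # w) x y) (at x)"
      unfolding E_def using B(2) by (auto intro!: DERIV_cmult)
    have 2: "((\<lambda>t. E w x t) has_field_derivative E (False # w) x y) (at y)"
      unfolding E_def using GG_deriv[OF y] by (auto intro!: DERIV_cmult_right)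
    show "case p of (x, y) \<Rightarrow> ((\<lambda>t. E w t y) has_field_derivative E (True # w) x y) (at x) \<and>
          ((\<lambda>t. E w x t) has_field_derivative E (False # w) x y) (at y)"
      using 1 2 xy by simp
  qed
qed

lemma key_ineq:
  fixes Xv c r e C K \<delta> :: real
  assumes "0 < e" "e \<le> 1/2" "r = 1 - e" "Xv^2 \<le> C*(1-c)" "c \<le> 1" "0 \<le> C" "0 \<le> K"
    "e*(2*K*C+1) \<le> \<delta>"
  shows "K * Xv^2 * ((1-r^2)/(1 - 2*r*c + r^2)) \<le> \<delta>"
proof -
  have den: "1 - 2*r*c + r^2 = e^2 + 2*r*(1-c)" unfolding assms(3) by (simp add: power2_eq_square algebra_simps)
  have r: "r \<ge> 1/2" using assms by simp
  have nn: "2*r*(1-c) \<ge> 0" using r assms(5) by (intro mult_nonneg_nonneg) auto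
  have ep: "e^2 > 0" using assms(1) by simp
  have dpos: "1 - 2*r*c + r^2 > 0" using den nn ep by linarith
  have m0: "2*r*(1-c) \<ge> 1*(1-c)" using r assms(5) by (intro mult_right_mono) auto
  then have m1: "2*r*(1-c) \<ge> 1-c" by simp
  have ge: "1 - 2*r*c + r^2 \<ge> 1 - c" using den m1 ep by linarith
  have qe: "1 - r^2 = 2*e - e*e" unfolding assms(3) by (simp add: power2_eq_square algebra_simps)
  have "e*e \<le> e*(1/2)" using assms(1,2) by (intro mult_left_mono) auto
  then have q: "1 - r^2 \<le> 2*e" "0 \<le> 1 - r^2" using qe assms(1) by auto
  have "Xv^2 * (1 - r^2) \<le> C*(1-c) * (2*e)"
    using assms(4) q by (intro mult_mono) (auto simp: assms(6) assms(5))
  also have "\<dots> \<le> C * (1 - 2*r*c + r^2) * (2*e)"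
    using ge assms by (intro mult_right_mono mult_left_mono) auto
  finally have "Xv^2 * ((1 - r^2) / (1 - 2*r*c + r^2)) \<le> 2*C*e"
    using dpos by (simp add: field_simps)
  then have "K * (Xv^2 * ((1 - r^2) / (1 - 2*r*c + r^2))) \<le> K * (2*C*e)"
    using assms(7) by (rule mult_left_mono)
  also have "\<dots> = e*(2*K*C)" by (simp add: algebra_simps)
  also have "\<dots> \<le> e*(2*K*C+1)" using assms(1) by (simp add: distrib_left)
  also have "\<dots> \<le> \<delta>" using assms(8) .
  finally show ?thesis by (simp add: mult.assoc)
qed



lemma S_deriv:
  fixes r x0 x :: real
  assumes r: "0 < r" "r < 1"
  shows "((\<lambda>x. -2 * arctan (r * sin (x - x0) / (1 - r * cos (x - x0)))) has_field_derivative
           2*r*(r - cos (x - x0)) / (1 - 2*r*cos (x - x0) + r^2)) (at x)"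
proof -
  define c where "c = cos (x - x0)"
  define sv where "sv = sin (x - x0)"
  have sc: "c*c + sv* sv = 1" unfolding sv_def c_def by (simp add: power2_eq_square[symmetric])
  have "r * c \<le> r * 1" using mult_left_mono[of c 1 r] r by (simp add: c_def)
  then have q: "1 - r * c > 0" using r by linarith
  have du: "((\<lambda>x. r * sin (x - x0) / (1 - r * cos (x - x0))) has_field_derivative
     ((r * c) * (1 - r * c) - (r * sv) * (- (r * (- sv)))) / ((1 - r * c) * (1 - r * c))) (at x)"
    unfolding sv_def c_def
    using q unfolding c_def by (intro DERIV_divide) (auto intro!: derivative_eq_intros)
  have da: "((\<lambda>x. -2 * arctan (r * sin (x - x0) / (1 - r * cos (x - x0)))) has_field_derivative
     -2 * (inverse (1 + (r * sv / (1 - r * c))^2) * (((r * c) * (1 - r * c) - (r * sv) * (- (r * (- sv)))) / ((1 - r * c) * (1 - r * c))))) (at x)"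
    using DERIV_cmult[where c="-2", OF DERIV_chain2[OF DERIV_arctan du]] unfolding sv_def c_def by (simp only: times_divide_eq_right mult.assoc minus_mult_minus mult_minus_right)
  have e2: "(r * c) * (1 - r * c) - (r * sv) * (- (r * (- sv))) = r * c - r * r"
  proof -
    have "(r * c) * (1 - r * c) - (r * sv) * (- (r * (- sv))) = r*c - r*r*(c*c + sv* sv)" by (simp add: algebra_simps)
    then show ?thesis using sc by simp
  qed
  have e1: "1 + (r * sv / (1 - r * c))^2 = (1 - 2*r*c + r^2) / ((1 - r * c) * (1 - r * c))"
  proof -
    have "(1 - r * c) * (1 - r * c) + (r * sv) * (r * sv) = 1 - 2*r*c + r*r*(c*c + sv* sv)" by (simp add: algebra_simps)
    then have "(1 - r * c) * (1 - r * c) + (r * sv) * (r * sv) = 1 - 2*r*c + r^2" using sc by (simp add: power2_eq_square)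
    moreover have qq: "(1 - r*c)*(1 - r*c) \<noteq> 0" using q by simp
    moreover have "(r * sv / (1 - r * c))^2 = (r* sv)*(r* sv) / ((1 - r*c)*(1 - r*c))" by (simp add: power2_eq_square)
    moreover have "1 + (r* sv)*(r* sv) / ((1 - r*c)*(1 - r*c)) = ((1 - r * c) * (1 - r * c) + (r * sv) * (r * sv)) / ((1 - r*c)*(1 - r*c))"
      using qq by (simp add: add_divide_distrib)
    ultimately show ?thesis by simp
  qed
  have d: "1 - 2*r*c + r^2 > 0"
  proof -
    have "(1 - r * c) * (1 - r * c) + (r * sv) * (r * sv) = 1 - 2*r*c + r*r*(c*c + sv* sv)" by (simp add: algebra_simps)
    then have "1 - 2*r*c + r^2 = (1 - r * c) * (1 - r * c) + (r * sv) * (r * sv)" using sc by (simp add: power2_eq_square)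
    moreover have "(1 - r * c) * (1 - r * c) > 0" using q by simp
    moreover have "(r * sv) * (r * sv) \<ge> 0" by simp
    ultimately show ?thesis by linarith
  qed
  have "-2 * (inverse (1 + (r * sv / (1 - r * c))^2) * (((r * c) * (1 - r * c) - (r * sv) * (- (r * (- sv)))) / ((1 - r * c) * (1 - r * c))))
      = 2*r*(r - c) / (1 - 2*r*c + r^2)"
  proof -
    have gen: "inverse (D / Q) * (N / Q) = N / D" if "Q \<noteq> 0" "D \<noteq> 0" for D Q N :: real
      using that by (simp add: inverse_divide)
    have qq: "(1 - r*c)*(1 - r*c) \<noteq> 0" using q by simp
    have "-2 * (inverse ((1 - 2*r*c + r^2) / ((1 - r * c) * (1 - r * c))) * ((r * c - r * r) / ((1 - r * c) * (1 - r * c))))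
        = -2 * ((r * c - r * r) / (1 - 2*r*c + r^2))" using gen[OF qq] d by simp
    also have "\<dots> = 2*r*(r - c) / (1 - 2*r*c + r^2)" by (simp add: algebra_simps)
    finally show ?thesis unfolding e1 e2 .
  qed
  then show ?thesis using da unfolding c_def by simp
qed


theorem mainTheorem16:
  fixes X :: "real \<Rightarrow> real"
  assumes smooth: "smooth1_on UNIV X"
    and per: "periodic2pi X"
    and has_zero: "\<exists>x0. X x0 = 0"
    and nondeg: "\<forall>x0. X x0 = 0 \<longrightarrow> deriv X x0 \<noteq> 0"
  shows "\<exists>(a :: real \<Rightarrow> real \<Rightarrow> real) (\<delta>::real).
           smooth2_on {(x, \<xi>). \<xi> \<noteq> 0} a \<and>
           (\<forall>\<xi>. periodic2pi (\<lambda>x. a x \<xi>)) \<and>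
           pos_homogeneous 1 a \<and>
           \<delta> > 0 \<and>
           (\<forall>x \<xi>. \<xi> \<noteq> 0 \<longrightarrow> poisson (\<lambda>x \<xi>. \<xi> * X x) a x \<xi> \<ge> \<delta> * \<bar>\<xi>\<bar>) \<and>
           (\<exists>W :: real set. open W \<and> W \<noteq> {} \<and>
              (\<forall>x\<in>W. \<forall>\<xi>. \<xi> \<noteq> 0 \<longrightarrow> a x \<xi> \<le> - \<bar>\<xi>\<bar> / 2))"
proof -
  obtain D where D0: "D 0 = X" and Dd': "\<forall>n. \<forall>x\<in>UNIV. (D n has_field_derivative D (Suc n) x) (at x)"
    using smooth unfolding smooth1_on_def by blast
  have Dd: "(D n has_field_derivative D (Suc n) x) (at x)" for n x using Dd' by blast
  have Dsm: "smooth1_on UNIV (D n)" for n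
    unfolding smooth1_on_def by (rule exI[of _ "\<lambda>m. D (n+m)"]) (auto intro: Dd)
  have Dc: "continuous_on UNIV (D n)" for n
    using Dd by (meson DERIV_isCont continuous_at_imp_continuous_on)
  have Dp: "periodic2pi (D n)" for n
  proof (induction n)
    case 0 then show ?case using per D0 by simp
  next
    case (Suc n) then show ?case using per_deriv Dd by blast
  qed
  have dX: "(X has_field_derivative D 1 x) (at x)" for x using Dd[of 0 x] D0 by simp
  have derivX: "deriv X x = D 1 x" for x using DERIV_imp_deriv[OF dX] .
  have Xc: "continuous_on UNIV X" using Dc[of 0] D0 by simp
  define p where "p x = (D 1 x)^2 - X x * D 2 x" for x
  have pc: "continuous_on UNIV p" unfolding p_def by (intro continuous_intros Dc Xc)
  have pp: "periodic2pi p" using Dp[of 1] Dp[of 2] per unfolding p_def periodic2pi_def by simp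
  define g where "g x = max (p x) ((X x)^2)" for x
  have gc: "continuous_on UNIV g" unfolding g_def by (intro continuous_intros pc Xc)
  have gp: "periodic2pi g" using pp per unfolding g_def periodic2pi_def by simp
  have gpos: "\<forall>x. g x > 0"
  proof
    fix x show "g x > 0"
    proof (cases "X x = 0")
      case True
      then have "D 1 x \<noteq> 0" using nondeg derivX by metis
      then show ?thesis using True by (simp add: g_def p_def)
    next
      case False
      then have "(X x)^2 > 0" by simp
      then show ?thesis by (simp add: g_def less_max_iff_disj)
    qed
  qed
  obtain \<mu> where mu: "\<mu> > 0" "\<forall>x. g x \<ge> \<mu>" using per_min[OF gp gc gpos] by blast
  obtain P where P: "\<forall>x. \<bar>p x\<bar> \<le> P" using per_bound[OF pp pc] by blast
  have P0: "P \<ge> 0" using P[rule_format, of 0] by linarith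
  define K where "K = (P + \<mu>)/\<mu> + 1"
  have Kmu: "K * \<mu> = P + 2*\<mu>" unfolding K_def using mu by (simp add: field_simps)
  have K1: "K \<ge> 1" unfolding K_def using P0 mu by simp
  have A: "p x + K * (X x)^2 \<ge> \<mu>" for x
  proof (cases "p x \<ge> \<mu>")
    case True
    moreover have "K * (X x)^2 \<ge> 0" using K1 by simp
    ultimately show ?thesis by linarith
  next
    case False
    then have "(X x)^2 \<ge> \<mu>" using mu(2) unfolding g_def by (metis max_def)
    then have "K * (X x)^2 \<ge> K * \<mu>" using K1 by (intro mult_left_mono) auto
    moreover have "-P \<le> p x" using P[rule_format, of x] by (simp add: abs_le_iff)
    ultimately show ?thesis using Kmu mu(1) by linarith
  qed
  obtain x0 where x0: "X x0 = 0" using has_zero by blast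
  obtain L where L: "\<forall>x. \<bar>D 1 x\<bar> \<le> L" using per_bound[OF Dp[of 1] Dc[of 1]] by blast
  have L0: "L \<ge> 0" using L[rule_format, of 0] by linarith
  define C where "C = 18 * L^2"
  have C0: "C \<ge> 0" unfolding C_def by simp
  have percos: "periodic2pi cos" unfolding periodic2pi_def by simp
  have B: "(X x)^2 \<le> C * (1 - cos (x - x0))" for x
  proof -
    define k where "k = \<lfloor>(x - x0)/(2*pi) + 1/2\<rfloor>"
    define y where "y = x - x0 - 2*pi * of_int k"
    have "of_int k \<le> (x - x0)/(2*pi) + 1/2" "(x - x0)/(2*pi) + 1/2 < of_int k + 1"
      unfolding k_def by linarith+
    then have "2*pi * of_int k \<le> x - x0 + pi" "x - x0 + pi < 2*pi * of_int k + 2*pi"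
      using pi_gt_zero by (simp_all add: field_simps)
    then have yb: "\<bar>y\<bar> \<le> pi" unfolding y_def by linarith
    have "X x = X (x0 + y)" using per_int[OF per, of "x0 + y" k] unfolding y_def by simp
    moreover have "cos (x - x0) = cos y" using per_int[OF percos, of y k] unfolding y_def by simp
    moreover have "\<bar>X (x0 + y) - X x0\<bar> \<le> L * \<bar>x0 + y - x0\<bar>"
      by (rule lipschitz_deriv) (use dX L in auto)
    ultimately have ax: "\<bar>X x\<bar> \<le> L * \<bar>y\<bar>" and cy: "cos (x - x0) = cos y" using x0 by auto
    have "(X x)^2 = \<bar>X x\<bar>^2" by simp
    also have "\<dots> \<le> (L * \<bar>y\<bar>)^2" using ax by (intro power_mono) auto
    also have "\<dots> = L^2 * y^2" by (simp add: power_mult_distrib)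
    also have "\<dots> \<le> L^2 * (18 * (1 - cos y))" using cos_ineq[OF yb] by (intro mult_left_mono) auto
    also have "\<dots> = 18 * L^2 * (1 - cos y)" by (simp add: algebra_simps)
    finally show ?thesis unfolding C_def cy .
  qed
  define \<delta> where "\<delta> = \<mu> / 2"
  have d0: "\<delta> > 0" unfolding \<delta>_def using mu by simp
  define e where "e = min (1/2) (\<delta> / (2*K*C+1))"
  have "K*C \<ge> 0" using K1 C0 by simp
  then have KC: "2*K*C + 1 > 0" by linarith
  have e0: "e > 0" unfolding e_def using d0 KC by simp
  have e1: "e \<le> 1/2" unfolding e_def by (rule min.cobounded1)
  have e2: "e * (2*K*C+1) \<le> \<delta>"
  proof -
    have "e \<le> \<delta> / (2*K*C+1)" unfolding e_def by (rule min.cobounded2)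
    then show ?thesis using KC by (simp add: field_simps)
  qed
  define r where "r = 1 - e"
  have r0: "0 < r" "r < 1" unfolding r_def using e0 e1 by auto
  define S where "S x = -2 * arctan (r * sin (x - x0) / (1 - r * cos (x - x0)))" for x
  define S' where "S' x = 2*r*(r - cos (x - x0)) / (1 - 2*r*cos (x - x0) + r^2)" for x
  have dS: "(S has_field_derivative S' x) (at x)" for x
    using S_deriv[OF r0, of x0 x] unfolding S_def[abs_def] S'_def by simp
  have qn: "1 + (-r) * cos (x + - x0) \<noteq> 0" for x
  proof -
    have "r * cos (x - x0) \<le> r" using mult_left_mono[of "cos (x - x0)" 1 r] r0 by simp
    then have "r * cos (x - x0) < 1" using r0 by linarith
    then show ?thesis by simp
  qed
  have Ssm: "smooth1_on UNIV S"
  proof -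
    have eqS: "S = (\<lambda>x. (\<lambda>_. -2) x * arctan ((\<lambda>_. r) x * sin (x + - x0) * inverse ((\<lambda>_. 1) x + (\<lambda>_. -r) x * cos (x + - x0))))"
      by (auto simp: S_def divide_inverse)
    have "smooth1_on UNIV (\<lambda>x. (\<lambda>_. -2) x * arctan ((\<lambda>_. r) x * sin (x + - x0) * inverse ((\<lambda>_. 1) x + (\<lambda>_. -r) x * cos (x + - x0))))"
      by (intro sm_mul sm_const sm_arctan sm_inverse sm_add sm_sin sm_cos) (use qn in auto)
    then show ?thesis using eqS by simp
  qed
  have Sp: "periodic2pi S"
  proof -
    have "x + 2*pi - x0 = (x - x0) + 2*pi" for x by simp
    then show ?thesis unfolding periodic2pi_def S_def by (simp only:) simp
  qed
  have "\<exists>x1. X x1 \<noteq> 0"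
  proof (rule ccontr)
    assume "\<not> ?thesis"
    then have "X = (\<lambda>_. 0)" by auto
    then have "deriv X x0 = 0" by simp
    then show False using nondeg x0 by blast
  qed
  then obtain x1 where x1: "X x1 \<noteq> 0" by blast
  define C1 where "C1 = (D 1 x1 - 1) / (K * X x1) - S x1"
  define b where "b x = - D 1 x + K * X x * (S x + C1)" for x
  define b' where "b' x = - D 2 x + K * (D 1 x * (S x + C1) + X x * S' x)" for x
  have db: "(b has_field_derivative b' x) (at x)" for x
  proof -
    have h1: "(D 1 has_field_derivative D 2 x) (at x)" using Dd[of 1 x] by (simp add: numeral_2_eq_2)
    have h2: "((\<lambda>x. K * X x) has_field_derivative K * D 1 x) (at x)" by (rule DERIV_cmult[OF dX])
    have h3: "((\<lambda>x. S x + C1) has_field_derivative S' x + 0) (at x)" by (rule DERIV_add[OF dS DERIV_const])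
    have "((\<lambda>x. - D 1 x + K * X x * (S x + C1)) has_field_derivative
       - D 2 x + (K * D 1 x * (S x + C1) + (S' x + 0) * (K * X x))) (at x)"
      by (rule DERIV_add[OF DERIV_minus[OF h1] DERIV_mult[OF h2 h3]])
    then show ?thesis unfolding b_def[abs_def] b'_def by (simp add: algebra_simps)
  qed
  have bsm: "smooth1_on UNIV b"
  proof -
    have eqb: "b = (\<lambda>x. (\<lambda>_. -1) x * D 1 x + ((\<lambda>_. K) x * X x) * (S x + (\<lambda>_. C1) x))"
      by (auto simp: b_def)
    have "smooth1_on UNIV (\<lambda>x. (\<lambda>_. -1) x * D 1 x + ((\<lambda>_. K) x * X x) * (S x + (\<lambda>_. C1) x))"
      by (intro sm_mul sm_add sm_const Dsm Ssm smooth)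
    then show ?thesis using eqb by simp
  qed
  have bc: "continuous_on UNIV b"
    using db by (meson DERIV_isCont continuous_at_imp_continuous_on)
  have bp: "periodic2pi b"
    using Dp[of 1] per Sp unfolding periodic2pi_def b_def by simp
  have bx1: "b x1 = -1"
    using x1 K1 unfolding b_def C1_def by (simp add: field_simps)
  have Wr: "X x * b' x - D 1 x * b x \<ge> \<delta>" for x
  proof -
    define c where "c = cos (x - x0)"
    have den: "1 - 2*r*c + r^2 = e^2 + 2*r*(1-c)" unfolding r_def by (simp add: power2_eq_square algebra_simps)
    have c1: "c \<le> 1" unfolding c_def by simp
    have "2*r*(1-c) \<ge> 0" using r0 c1 by simp
    then have dpos: "1 - 2*r*c + r^2 > 0" using den e0 by (smt (verit) zero_less_power2)
    have S'e: "S' x = 1 - (1 - r^2) / (1 - 2*r*c + r^2)"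
      unfolding S'_def c_def[symmetric] using dpos by (simp add: field_simps power2_eq_square)
    have eq: "X x * b' x - D 1 x * b x = p x + K * (X x)^2 * S' x"
      unfolding b_def b'_def p_def by (simp add: algebra_simps power2_eq_square)
    have key: "K * (X x)^2 * ((1-r^2)/(1 - 2*r*c + r^2)) \<le> \<delta>"
      by (rule key_ineq[OF e0 e1 r_def _ c1 C0 _ e2]) (use B[of x] K1 in \<open>auto simp: c_def\<close>)
    have "p x + K * (X x)^2 * S' x = (p x + K * (X x)^2) - K * (X x)^2 * ((1-r^2)/(1 - 2*r*c + r^2))"
      unfolding S'e by (simp add: algebra_simps)
    then show ?thesis using eq key A[of x] unfolding \<delta>_def by linarith
  qed
  define a where "a x \<xi> = \<bar>\<xi>\<bar> * b x" for x \<xi>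
  show ?thesis
  proof (intro exI[of _ a] exI[of _ \<delta>] conjI allI impI)
    show "smooth2_on {(x, \<xi>). \<xi> \<noteq> 0} a" unfolding a_def[abs_def] by (rule smooth2_abs[OF bsm])
  next
    fix \<xi> show "periodic2pi (\<lambda>x. a x \<xi>)" using bp unfolding periodic2pi_def a_def by simp
  next
    show "pos_homogeneous 1 a" unfolding pos_homogeneous_def a_def by (auto simp: abs_mult)
  next
    show "\<delta> > 0" by (rule d0)
  next
    fix x \<xi> :: real assume xi: "\<xi> \<noteq> 0"
    have d1: "deriv (\<lambda>\<eta>. \<eta> * X x) \<xi> = X x"
      by (rule DERIV_imp_deriv) (auto intro!: derivative_eq_intros)
    have d2: "deriv (\<lambda>y. a y \<xi>) x = \<bar>\<xi>\<bar> * b' x"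
      unfolding a_def by (rule DERIV_imp_deriv) (rule DERIV_cmult[OF db])
    have d3: "deriv (\<lambda>y. \<xi> * X y) x = \<xi> * D 1 x"
      by (rule DERIV_imp_deriv) (rule DERIV_cmult[OF dX])
    have d4: "deriv (\<lambda>\<eta>. a x \<eta>) \<xi> = sgn \<xi> * b x"
      unfolding a_def by (rule DERIV_imp_deriv) (rule DERIV_cmult_right[OF deriv_abs_nz[OF xi]])
    have sg: "\<xi> * sgn \<xi> = \<bar>\<xi>\<bar>" by (cases "\<xi> > 0") (auto simp: sgn_real_def)
    have "poisson (\<lambda>x \<xi>. \<xi> * X x) a x \<xi> = \<bar>\<xi>\<bar> * (X x * b' x - D 1 x * b x)"
      unfolding poisson_def d1 d2 d3 d4 using sg by (simp add: algebra_simps)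
    moreover have "\<bar>\<xi>\<bar> * (X x * b' x - D 1 x * b x) \<ge> \<bar>\<xi>\<bar> * \<delta>"
      using Wr[of x] by (intro mult_left_mono) auto
    ultimately show "poisson (\<lambda>x \<xi>. \<xi> * X x) a x \<xi> \<ge> \<delta> * \<bar>\<xi>\<bar>" by (simp add: mult.commute)
  next
    show "\<exists>W :: real set. open W \<and> W \<noteq> {} \<and> (\<forall>x\<in>W. \<forall>\<xi>. \<xi> \<noteq> 0 \<longrightarrow> a x \<xi> \<le> - \<bar>\<xi>\<bar> / 2)"
    proof (intro exI[of _ "{x. b x < -1/2}"] conjI ballI allI impI)
      show "open {x. b x < -1/2}" by (rule open_Collect_less[OF bc continuous_on_const])
      have "x1 \<in> {x. b x < -1/2}" using bx1 by simp
      then show "{x. b x < -1/2} \<noteq> {}" by blast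
    next
      fix x \<xi> :: real assume "x \<in> {x. b x < -1/2}"
      then have "b x \<le> -1/2" by simp
      then have "\<bar>\<xi>\<bar> * b x \<le> \<bar>\<xi>\<bar> * (-1/2)" by (intro mult_left_mono) auto
      then show "a x \<xi> \<le> - \<bar>\<xi>\<bar> / 2" unfolding a_def by simp
    qed
  qed
qed


end
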